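(* In the setting below, for every integer $t$ with $1 \leq t < \tau$ and every $i \in D_t^-$, if $\eta \geq \eta_0$ then $$a_{t+1}^i - a_t^i \geq \max\left(\frac{\eta\|x_i\|^2}{2n(\exp(a_t^i)+1)}, \ \frac{1}{2}\eta\gamma^2 G(w_t)\right).$$
   Context: Dimension $d=2$. Data $x_1,\dots,x_n\in\mathbb{R}^2$ with $\|x_i\|\le 1$, linearly separable (some $w$ has $\langle w,x_i\rangle>0$ for all $i$). $F(w) = \frac{1}{n}\sum_{i=1}^n \log(1+\exp(-\langle w, x_i\rangle))$ and $G(w) = \frac{1}{n}\sum_{i=1}^n \frac{1}{\exp(\langle w, x_i\rangle)+1}$. Maximum margin $\gamma = \max_{\|w\|=1}\min_i \langle w, x_i\rangle$ with maximizer the unit vector $w_*$; $v_*$ is a fixed unit vector orthogonal to $w_*$. Gradient descent: $w_0=0$, $w_{t+1} = w_t - \eta\nabla F(w_t)$ with constant $\eta>0$. $\tilde{w}_t = \langle w_t, v_*\rangle$, $\tilde{x}_i = \langle x_i, v_*\rangle$, $a_t^i = \langle w_t, x_i\rangle$, $D_t^- = \{i\in[n] : \tilde{x}_i\tilde{w}_t < 0\}$. $\tau = \min\{t\ge 0: F(w_t)\le 1/(8\eta)\}$. $\eta_0 = \max(n, \frac{32}{\gamma^2}\log\frac{256}{\gamma^2})$. *)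

theory Defs
  imports "HOL-Analysis.Analysis"
begin

text \<open>Data: n points x 0, ..., x (n-1) in R^2 (indices shifted by one w.r.t. the paper).\<close>

definition logloss :: "nat \<Rightarrow> (nat \<Rightarrow> real^2) \<Rightarrow> real^2 \<Rightarrow> real" where
  "logloss n x w = (1 / real n) * (\<Sum>i<n. ln (1 + exp (- (w \<bullet> x i))))"

definition Gfun :: "nat \<Rightarrow> (nat \<Rightarrow> real^2) \<Rightarrow> real^2 \<Rightarrow> real" where
  "Gfun n x w = (1 / real n) * (\<Sum>i<n. 1 / (exp (w \<bullet> x i) + 1))"

definition margin :: "nat \<Rightarrow> (nat \<Rightarrow> real^2) \<Rightarrow> real" where
  "margin n x = (SUP w\<in>{w. norm w = 1}. Min ((\<lambda>i. w \<bullet> x i) ` {..<n}))"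

definition grad :: "(real^2 \<Rightarrow> real) \<Rightarrow> real^2 \<Rightarrow> real^2" where
  "grad f w = (THE g. (f has_derivative (\<lambda>h. g \<bullet> h)) (at w))"

fun gd :: "nat \<Rightarrow> (nat \<Rightarrow> real^2) \<Rightarrow> real \<Rightarrow> nat \<Rightarrow> real^2" where
  "gd n x eta 0 = 0"
| "gd n x eta (Suc t) = gd n x eta t - eta *\<^sub>R grad (logloss n x) (gd n x eta t)"

definition tau :: "nat \<Rightarrow> (nat \<Rightarrow> real^2) \<Rightarrow> real \<Rightarrow> nat" where
  "tau n x eta = (LEAST t. logloss n x (gd n x eta t) \<le> 1 / (8 * eta))"

definition eta0 :: "nat \<Rightarrow> real \<Rightarrow> real" where
  "eta0 n gamma = max (real n) (32 / gamma^2 * ln (256 / gamma^2))"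

end

theory Submission
  imports Defs
begin

lemma der1: "((\<lambda>w::real^2. ln (1 + exp (- (w \<bullet> y)))) has_derivative (\<lambda>h. (- (1/(exp (w \<bullet> y) + 1)) *\<^sub>R y) \<bullet> h)) (at w)"
proof -
  have "((\<lambda>w::real^2. ln (1 + exp (- (w \<bullet> y)))) has_derivative (\<lambda>h. (1/(1 + exp (- (w \<bullet> y)))) * (exp (- (w \<bullet> y)) * (- (h \<bullet> y))))) (at w)"
    by (auto intro!: derivative_eq_intros ext simp: add_pos_pos field_simps)
  moreover have "(1/(1 + exp (- (w \<bullet> y)))) * (exp (- (w \<bullet> y)) * (- (h \<bullet> y))) = (- (1/(exp (w \<bullet> y) + 1)) *\<^sub>R y) \<bullet> h" for h
    by (simp add: exp_minus field_simps inner_commute)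
  ultimately show ?thesis by simp
qed

lemma der_logloss:
  "(logloss n x has_derivative (\<lambda>h. (- ((1/real n) *\<^sub>R (\<Sum>j<n. (1/(exp (w \<bullet> x j)+1)) *\<^sub>R x j))) \<bullet> h)) (at w)"
proof -
  have "((\<lambda>w. \<Sum>j<n. ln (1 + exp (- (w \<bullet> x j)))) has_derivative
        (\<lambda>h. \<Sum>j<n. (- (1/(exp (w \<bullet> x j) + 1)) *\<^sub>R x j) \<bullet> h)) (at w)"
    by (rule has_derivative_sum) (rule der1)
  then have "((\<lambda>w. (1/real n) * (\<Sum>j<n. ln (1 + exp (- (w \<bullet> x j))))) has_derivative
        (\<lambda>h. (1/real n) * (\<Sum>j<n. (- (1/(exp (w \<bullet> x j) + 1)) *\<^sub>R x j) \<bullet> h))) (at w)"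
    by (rule has_derivative_mult_right)
  moreover have "(\<lambda>h. (1/real n) * (\<Sum>j<n. (- (1/(exp (w \<bullet> x j) + 1)) *\<^sub>R x j) \<bullet> h))
     = (\<lambda>h. (- ((1/real n) *\<^sub>R (\<Sum>j<n. (1/(exp (w \<bullet> x j)+1)) *\<^sub>R x j))) \<bullet> h)"
    by (simp add: inner_sum_left sum_distrib_left sum_negf)
  ultimately show ?thesis unfolding logloss_def by (metis (no_types, lifting) ext)
qed

lemma grad_logloss:
  "grad (logloss n x) w = - ((1/real n) *\<^sub>R (\<Sum>j<n. (1/(exp (w \<bullet> x j)+1)) *\<^sub>R x j))"
  unfolding grad_def
proof (rule the_equality)
  show "(logloss n x has_derivative (\<lambda>h. (- ((1/real n) *\<^sub>R (\<Sum>j<n. (1/(exp (w \<bullet> x j)+1)) *\<^sub>R x j))) \<bullet> h)) (at w)"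
    by (rule der_logloss)
next
  fix g assume "(logloss n x has_derivative (\<lambda>h. g \<bullet> h)) (at w)"
  then have e: "(\<lambda>h. g \<bullet> h) = (\<lambda>h. (- ((1/real n) *\<^sub>R (\<Sum>j<n. (1/(exp (w \<bullet> x j)+1)) *\<^sub>R x j))) \<bullet> h)"
    using der_logloss has_derivative_unique by blast
  show "g = - ((1/real n) *\<^sub>R (\<Sum>j<n. (1/(exp (w \<bullet> x j)+1)) *\<^sub>R x j))" (is "g = ?G")
  proof -
    have h: "g \<bullet> (g - ?G) = ?G \<bullet> (g - ?G)" using fun_cong[OF e, of "g - ?G"] by (simp only:)
    have "(g - ?G) \<bullet> (g - ?G) = 0" unfolding inner_diff_left[of g ?G "g - ?G"] using h by (simp only: diff_self)
    then have "g - ?G = 0" by (simp only: inner_eq_zero_iff)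
    then show ?thesis by (simp only: right_minus_eq)
  qed
qed

lemma gd_step:
  "gd n x eta (Suc t) \<bullet> y = gd n x eta t \<bullet> y + eta / real n * (\<Sum>j<n. (x j \<bullet> y) / (exp (gd n x eta t \<bullet> x j) + 1))"
  by (simp add: grad_logloss inner_diff_left inner_sum_left sum_distrib_left algebra_simps)

lemma ortho2:
  fixes w v y z :: "real^2"
  assumes "norm w = 1" "norm v = 1" "v \<bullet> w = 0"
  shows "y \<bullet> z = (y \<bullet> w) * (z \<bullet> w) + (y \<bullet> v) * (z \<bullet> v)"
proof -
  have a: "w \<bullet> w = 1" "v \<bullet> v = 1" using assms by (simp_all add: dot_square_norm)
  have "w$1 * w$1 + w$2 * w$2 = 1" "v$1 * v$1 + v$2 * v$2 = 1" "v$1 * w$1 + v$2 * w$2 = 0"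
    using a assms(3) by (simp_all add: inner_vec_def sum_2)
  then show ?thesis by (simp add: inner_vec_def sum_2) algebra
qed

lemma keyK:
  fixes c eta :: real
  assumes c0: "0 < c" and c1: "c \<le> 1" and e: "eta \<ge> 32 / c^2 * ln (256 / c^2)"
  shows "exp (eta * c^2 / 2) \<ge> 48 * eta^2 / c^2"
proof -
  define C where "C = c^2"
  have C0: "0 < C" and C1: "C \<le> 1" using c0 c1 by (auto simp: C_def power_le_one)
  define L where "L = ln (256 / C)"
  have L0: "L > 0" unfolding L_def using C0 C1 by (simp add: field_simps)
  have "eta * C \<ge> 32 * L" using e C0 unfolding C_def L_def by (simp add: field_simps)
  define s where "s = eta * C / 2"
  have sL: "s \<ge> 16 * L" using \<open>eta * C \<ge> 32 * L\<close> unfolding s_def by simp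
  have s0: "s > 0" using sL L0 by simp
  have e3: "exp (3 * L) = (256 / C)^3"
    using exp_of_nat_mult[of 3 L] C0 by (simp add: L_def)
  have h1: "exp (s/2) \<ge> (256 / C)^3" proof -
    have "3 * L \<le> s/2" using sL L0 by simp
    then show ?thesis using e3 by (metis exp_le_cancel_iff)
  qed
  have h2: "exp (s/4) \<ge> s/4" using exp_ge_add_one_self[of "s/4"] by linarith
  have "exp s = exp (s/2) * (exp (s/4) * exp (s/4))" by (simp flip: exp_add)
  also have "\<dots> \<ge> (256 / C)^3 * ((s/4) * (s/4))"
    using h1 h2 s0 by (intro mult_mono) (auto intro: mult_mono)
  finally have "exp s \<ge> (256 / C)^3 * ((s/4) * (s/4))" .
  moreover have "(256 / C)^3 * ((s/4) * (s/4)) \<ge> 48 * eta^2 / C"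
  proof -
    have "48 * eta^2 / C = 192 * s^2 / C^3" using C0 unfolding s_def by (simp add: field_simps power2_eq_square power3_eq_cube)
    also have "\<dots> \<le> (256 / C)^3 * ((s/4) * (s/4))" using C0 by (simp add: field_simps power2_eq_square power3_eq_cube)
    finally show ?thesis .
  qed
  ultimately show ?thesis unfolding s_def C_def by linarith
qed

theorem lemma5:
  fixes n :: nat and x :: "nat \<Rightarrow> real^2" and eta :: real
    and wstar vstar :: "real^2" and t i :: nat
  assumes n_pos: "n \<ge> 1"
    and x_bdd: "\<forall>j<n. norm (x j) \<le> 1"
    and separable: "\<exists>w. \<forall>j<n. w \<bullet> x j > 0"
    and wstar_unit: "norm wstar = 1"
    and wstar_max: "Min ((\<lambda>j. wstar \<bullet> x j) ` {..<n}) = margin n x"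
    and vstar_unit: "norm vstar = 1"
    and vstar_orth: "vstar \<bullet> wstar = 0"
    and eta_pos: "eta > 0"
    and eta_ge: "eta \<ge> eta0 n (margin n x)"
    and t_ge: "1 \<le> t" and t_lt: "t < tau n x eta"
    and i_lt: "i < n"
    and i_neg: "(x i \<bullet> vstar) * (gd n x eta t \<bullet> vstar) < 0"
  shows "gd n x eta (Suc t) \<bullet> x i - gd n x eta t \<bullet> x i \<ge>
           max (eta * (norm (x i))^2 / (2 * real n * (exp (gd n x eta t \<bullet> x i) + 1)))
               ((1/2) * eta * (margin n x)^2 * Gfun n x (gd n x eta t))"
proof -
  define c where "c = margin n x"
  define w where "w = gd n x eta t"
  define g where "g = (\<lambda>j. 1 / (exp (w \<bullet> x j) + 1))"
  have n0: "{..<n} \<noteq> {}"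
  proof -
    have "0 \<in> {..<n}" using n_pos by simp
    then show ?thesis by blast
  qed
  have hx: "c \<le> wstar \<bullet> x j" if "j < n" for j
    unfolding c_def wstar_max[symmetric] using that by (intro Min_le) auto
  have ortho: "\<And>y z. y \<bullet> z = (y \<bullet> wstar) * (z \<bullet> wstar) + (y \<bullet> vstar) * (z \<bullet> vstar)"
    using ortho2[OF wstar_unit vstar_unit vstar_orth] by blast
  have c1: "c \<le> 1"
  proof -
    have "c \<le> wstar \<bullet> x 0" using hx n_pos by simp
    also have "\<dots> \<le> norm wstar * norm (x 0)" using norm_cauchy_schwarz by blast
    also have "\<dots> \<le> 1" using x_bdd n_pos wstar_unit by simp
    finally show ?thesis .
  qed
  have c0: "c > 0"
  proof -
    obtain u where u: "\<forall>j<n. u \<bullet> x j > 0" using separable by blast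
    have u0: "u \<noteq> 0" using u n_pos by (metis inner_zero_left less_irrefl less_le_trans zero_less_one)
    define u' where "u' = u /\<^sub>R norm u"
    have u'1: "norm u' = 1" using u0 by (simp add: u'_def)
    have pos: "Min ((\<lambda>j. u' \<bullet> x j) ` {..<n}) > 0"
      using n_pos n0 u u0 by (subst Min_gr_iff) (auto simp: u'_def)
    have bdd: "bdd_above ((\<lambda>w. Min ((\<lambda>i. w \<bullet> x i) ` {..<n})) ` {w. norm w = 1})"
    proof (rule bdd_aboveI2[where M=1])
      fix v :: "real^2" assume "v \<in> {w. norm w = 1}"
      then have "norm v = 1" by simp
      have "Min ((\<lambda>i. v \<bullet> x i) ` {..<n}) \<le> v \<bullet> x 0" using n_pos by (intro Min_le) auto
      also have "\<dots> \<le> norm v * norm (x 0)" using norm_cauchy_schwarz by blast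
      also have "\<dots> \<le> 1" using x_bdd n_pos \<open>norm v = 1\<close> by simp
      finally show "Min ((\<lambda>i. v \<bullet> x i) ` {..<n}) \<le> 1" .
    qed
    have "Min ((\<lambda>j. u' \<bullet> x j) ` {..<n}) \<le> c"
      unfolding c_def margin_def using bdd u'1 by (intro cSUP_upper) auto
    then show ?thesis using pos by linarith
  qed
  have eta_n: "eta \<ge> real n" and eta_l: "eta \<ge> 32 / c^2 * ln (256 / c^2)"
    using eta_ge unfolding eta0_def c_def by auto
  have eta1: "eta \<ge> 1" using eta_n n_pos by linarith
  have K: "exp (eta * c^2 / 2) \<ge> 48 * eta^2 / c^2" by (rule keyK[OF c0 c1 eta_l])
  define e where "e = exp (- (eta * c^2 / 2))"
  have e0: "e > 0" by (simp add: e_def)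
  have eK: "e * (48 * eta^2 / c^2) \<le> 1"
    using K mult_left_mono[OF K, of e] e0 by (simp add: e_def exp_minus field_simps)
  have g_pos: "\<And>v j. 0 < 1 / (exp (v \<bullet> x j) + 1)" by (simp add: add_pos_pos)
  have mono: "gd n x eta s \<bullet> wstar \<le> gd n x eta (Suc s) \<bullet> wstar" for s
  proof -
    have "0 \<le> (\<Sum>j<n. (x j \<bullet> wstar) / (exp (gd n x eta s \<bullet> x j) + 1))"
      using hx c0 by (intro sum_nonneg divide_nonneg_pos) (auto simp: inner_commute add_pos_pos intro: order.trans[OF less_imp_le[OF c0]])
    then show ?thesis unfolding gd_step using eta_pos by simp
  qed
  have first: "gd n x eta 1 \<bullet> wstar \<ge> eta * c / 2"
  proof -
    have "(\<Sum>j<n. c / 2) \<le> (\<Sum>j<n. (x j \<bullet> wstar) / (exp (gd n x eta 0 \<bullet> x j) + 1))"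
      using hx by (intro sum_mono) (simp add: inner_commute)
    then have "real n * (c/2) \<le> (\<Sum>j<n. (x j \<bullet> wstar) / (exp (gd n x eta 0 \<bullet> x j) + 1))" by simp
    then have "eta / real n * (real n * (c/2)) \<le> eta / real n * (\<Sum>j<n. (x j \<bullet> wstar) / (exp (gd n x eta 0 \<bullet> x j) + 1))"
      using eta_pos n_pos by (intro mult_left_mono) auto
    then show ?thesis using n_pos gd_step[of n x eta 0 wstar] by simp
  qed
  have grow: "w \<bullet> wstar \<ge> eta * c / 2"
  proof -
    have "gd n x eta 1 \<bullet> wstar \<le> gd n x eta t \<bullet> wstar"
      using t_ge
    proof (induction t rule: dec_induct)
      case base then show ?case by simp
    next
      case (step m) then show ?case using mono[of m] by linarith
    qed
    then show ?thesis using first unfolding w_def by linarith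
  qed
  have wpos: "0 \<le> w \<bullet> wstar" using grow mult_pos_pos[OF eta_pos c0] by linarith
  have Fbig: "logloss n x w > 1 / (8 * eta)"
    using not_less_Least[OF t_lt[unfolded tau_def]] unfolding w_def by simp
  have "\<exists>jm<n. ln (1 + exp (- (w \<bullet> x jm))) > 1 / (8 * eta)"
  proof (rule ccontr)
    assume "\<not> ?thesis"
    then have "\<forall>j<n. ln (1 + exp (- (w \<bullet> x j))) \<le> 1 / (8 * eta)" by (meson not_less)
    then have "(\<Sum>j<n. ln (1 + exp (- (w \<bullet> x j)))) \<le> (\<Sum>j<n. 1 / (8 * eta))" by (intro sum_mono) auto
    then have "(1 / real n) * (\<Sum>j<n. ln (1 + exp (- (w \<bullet> x j)))) \<le> 1 / (8 * eta)"
      using n_pos by (simp add: field_simps)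
    then show False using Fbig unfolding logloss_def by simp
  qed
  then obtain jm where jm: "jm < n" "ln (1 + exp (- (w \<bullet> x jm))) > 1 / (8 * eta)" by blast
  have gjm: "g jm > 1 / (16 * eta)"
  proof -
    define u where "u = exp (- (w \<bullet> x jm))"
    have u0: "u > 0" by (simp add: u_def)
    have gu: "g jm = u / (1 + u)" unfolding g_def u_def by (simp add: exp_minus field_simps)
    have lu: "ln (1 + u) \<le> u" using u0 by (simp add: ln_add_one_self_le_self)
    show ?thesis
    proof (cases "u \<le> 1")
      case True
      have "u / 2 \<le> u / (1 + u)" using True u0 by (simp add: field_simps)
      then show ?thesis using gu lu jm(2) unfolding u_def by (simp add: field_simps)
    next
      case False
      then have "1/2 < u / (1 + u)" by (simp add: field_simps)
      moreover have "1 / (16 * eta) \<le> 1/2" using eta1 by (simp add: field_simps)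
      ultimately show ?thesis using gu by linarith
    qed
  qed
  define Dp where "Dp = {j\<in>{..<n}. (x j \<bullet> vstar) * (w \<bullet> vstar) > 0}"
  define Nn where "Nn = {j\<in>{..<n}. \<not> (x j \<bullet> vstar) * (w \<bullet> vstar) > 0}"
  have gDp: "g j \<le> e" if "j \<in> Dp" for j
  proof -
    have j: "j < n" "(x j \<bullet> vstar) * (w \<bullet> vstar) > 0" using that by (auto simp: Dp_def)
    have "w \<bullet> x j = (w \<bullet> wstar) * (x j \<bullet> wstar) + (w \<bullet> vstar) * (x j \<bullet> vstar)" by (rule ortho)
    moreover have "(w \<bullet> wstar) * (x j \<bullet> wstar) \<ge> (eta * c / 2) * c"
      using grow hx[OF j(1)] c0 eta_pos wpos by (intro mult_mono) (auto simp: inner_commute)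
    moreover have "eta * c^2 / 2 = (eta*c/2)*c" by (simp add: power2_eq_square)
    moreover have "(w \<bullet> vstar) * (x j \<bullet> vstar) = (x j \<bullet> vstar) * (w \<bullet> vstar)" by (rule mult.commute)
    ultimately have a: "w \<bullet> x j \<ge> eta * c^2 / 2" using j(2) by linarith
    have "g j \<le> 1 / exp (w \<bullet> x j)" unfolding g_def by (intro divide_left_mono) (auto intro!: mult_pos_pos add_pos_pos)
    also have "\<dots> = exp (- (w \<bullet> x j))" by (simp add: exp_minus divide_inverse)
    also have "\<dots> \<le> e" unfolding e_def using a by simp
    finally show ?thesis .
  qed
  have small: "(1 + c^2/2) * (real n * e) \<le> (c^2/2) * (1 / (16 * eta))"
  proof -
    have "real n * e \<le> eta * e" using eta_n e0 by (simp add: mult_right_mono)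
    also have "\<dots> \<le> c^2 / (48 * eta)" using eK c0 eta_pos by (simp add: field_simps power2_eq_square)
    finally have ne1: "real n * e \<le> c^2 / (48 * eta)" .
    have "(1 + c^2/2) * (real n * e) \<le> (3/2) * (c^2 / (48 * eta))"
      using ne1 c1 c0 e0 by (intro mult_mono) (auto simp: power_le_one)
    then show ?thesis using eta_pos by (simp add: field_simps)
  qed
  have e_lt: "e < 1 / (16 * eta)"
  proof -
    have "real n * e \<ge> e" using n_pos e0 by simp
    moreover have "(1 + c^2/2) * (real n * e) \<ge> real n * e" using mult_right_mono[of 1 "1 + c^2/2" "real n * e"] e0 by simp
    moreover have "(c^2/2) * (1 / (16 * eta)) < 1 / (16 * eta)"
      proof -
      have "c^2 \<le> 1" using c0 c1 by (simp add: power_le_one)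
      then have "c^2/2 < 1" by simp
      moreover have "0 < 1 / (16 * eta)" using eta_pos by simp
      ultimately show ?thesis using mult_strict_right_mono[of "c^2/2" 1 "1 / (16 * eta)"] by (simp only: mult_1_left)
    qed
    ultimately show ?thesis using small by linarith
  qed
  have jmN: "jm \<in> Nn" using jm(1) gjm gDp e_lt unfolding Nn_def Dp_def by force
  have iN: "i \<in> Nn" using i_lt i_neg unfolding Nn_def w_def by auto
  have fin: "finite Dp" "finite Nn" by (auto simp: Dp_def Nn_def)
  have split: "{..<n} = Nn \<union> Dp" "Nn \<inter> Dp = {}" by (auto simp: Dp_def Nn_def)
  define T where "T = (\<lambda>j. (x j \<bullet> x i) * g j)"
  have g0: "\<And>j. g j > 0" unfolding g_def by (simp add: add_pos_pos)
  have TN: "T j \<ge> c^2 * g j" if "j \<in> Nn" for j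
  proof -
    have j: "j < n" "\<not> (x j \<bullet> vstar) * (w \<bullet> vstar) > 0" using that by (auto simp: Nn_def)
    have wv: "w \<bullet> vstar \<noteq> 0" using i_neg unfolding w_def by auto
    have "((x j \<bullet> vstar) * (x i \<bullet> vstar)) * (w \<bullet> vstar)^2 = ((x j \<bullet> vstar) * (w \<bullet> vstar)) * ((x i \<bullet> vstar) * (w \<bullet> vstar))"
      by (simp add: power2_eq_square algebra_simps)
    also have "\<dots> \<ge> 0" using j(2) i_neg unfolding w_def by (simp add: mult_nonpos_nonpos)
    finally have p: "(x j \<bullet> vstar) * (x i \<bullet> vstar) \<ge> 0" using wv
      by (metis not_le mult_neg_pos zero_less_power2)
    have "c * c \<le> (x j \<bullet> wstar) * (x i \<bullet> wstar)"
      using hx[OF j(1)] hx[OF i_lt] c0 by (intro mult_mono) (auto simp: inner_commute)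
    then have "c^2 \<le> x j \<bullet> x i" using ortho[of "x j" "x i"] p by (simp add: power2_eq_square)
    then show ?thesis unfolding T_def using g0[of j] by (simp add: mult_right_mono)
  qed
  have TD: "T j \<ge> - g j" if "j \<in> Dp" for j
  proof -
    have j: "j < n" using that by (auto simp: Dp_def)
    have "\<bar>x j \<bullet> x i\<bar> \<le> norm (x j) * norm (x i)" by (rule Cauchy_Schwarz_ineq2)
    also have "\<dots> \<le> 1 * 1" using x_bdd j i_lt by (intro mult_mono) auto
    finally have "x j \<bullet> x i \<ge> -1" by simp
    then show ?thesis unfolding T_def using mult_right_mono[of "-1" "x j \<bullet> x i" "g j"] g0[of j] by simp
  qed
  have xi2: "c^2 \<le> (norm (x i))^2"
  proof -
    have "c * c \<le> (x i \<bullet> wstar) * (x i \<bullet> wstar)"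
      using hx[OF i_lt] c0 by (intro mult_mono) (auto simp: inner_commute)
    moreover have "(norm (x i))^2 = x i \<bullet> x i" by (simp add: power2_norm_eq_inner)
    moreover have "0 \<le> (x i \<bullet> vstar) * (x i \<bullet> vstar)" by simp
    ultimately show ?thesis using ortho[of "x i" "x i"] unfolding power2_eq_square by linarith
  qed
  define SN where "SN = (\<Sum>j\<in>Nn. g j)"
  define M where "M = (\<Sum>j\<in>Dp. g j)"
  have SNjm: "SN \<ge> g jm" unfolding SN_def using fin jmN g0 by (intro member_le_sum) (auto intro: less_imp_le)
  have SNi: "SN \<ge> g i" unfolding SN_def using fin iN g0 by (intro member_le_sum) (auto intro: less_imp_le)
  have M_le: "M \<le> real n * e"
  proof -
    have "M \<le> (\<Sum>j\<in>Dp. e)" unfolding M_def using gDp by (intro sum_mono) auto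
    also have "\<dots> = real (card Dp) * e" by simp
    also have "\<dots> \<le> real n * e"
    proof -
      have "card Dp \<le> card {..<n}" by (rule card_mono) (auto simp: Dp_def)
      then show ?thesis using e0 by (intro mult_right_mono) auto
    qed
    finally show ?thesis .
  qed
  have keyM: "(1 + c^2/2) * M \<le> (c^2/2) * SN"
  proof -
    have "(1 + c^2/2) * M \<le> (1 + c^2/2) * (real n * e)" using M_le c0 by (intro mult_left_mono) auto
    also have "\<dots> \<le> (c^2/2) * (1 / (16 * eta))" by (rule small)
    also have "\<dots> \<le> (c^2/2) * SN" using SNjm gjm c0 by (intro mult_left_mono) auto
    finally show ?thesis .
  qed
  have sumT: "(\<Sum>j<n. T j) = T i + (\<Sum>j\<in>Nn - {i}. T j) + (\<Sum>j\<in>Dp. T j)"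
    using split fin iN by (simp add: sum.union_disjoint sum.remove)
  have SNrem: "SN = g i + (\<Sum>j\<in>Nn - {i}. g j)" unfolding SN_def using fin iN by (simp add: sum.remove)
  have A1: "(\<Sum>j\<in>Nn - {i}. T j) \<ge> c^2 * (\<Sum>j\<in>Nn - {i}. g j)"
    by (simp add: sum_distrib_left, intro sum_mono) (use TN in auto)
  have A2: "(\<Sum>j\<in>Dp. T j) \<ge> - M"
    unfolding M_def by (simp add: sum_negf[symmetric], intro sum_mono) (use TD in auto)
  have A3: "(\<Sum>j\<in>Nn. T j) \<ge> c^2 * SN"
    unfolding SN_def by (simp add: sum_distrib_left, intro sum_mono) (use TN in auto)
  have Ti: "T i = (norm (x i))^2 * g i" unfolding T_def by (simp add: power2_norm_eq_inner)
  have sumT2: "(\<Sum>j<n. T j) = (\<Sum>j\<in>Nn. T j) + (\<Sum>j\<in>Dp. T j)"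
    using split fin by (simp add: sum.union_disjoint)
  have lhs: "gd n x eta (Suc t) \<bullet> x i - gd n x eta t \<bullet> x i = eta / real n * (\<Sum>j<n. T j)"
    unfolding gd_step T_def g_def w_def by (simp add: field_simps)
  have boundA: "(\<Sum>j<n. T j) \<ge> (norm (x i))^2 * g i / 2"
  proof -
    have f0: "(norm (x i))^2 * g i \<ge> c^2 * g i" using xi2 g0[of i] by (simp add: mult_right_mono)
    have f1: "c^2 * (\<Sum>j\<in>Nn - {i}. g j) = c^2 * SN - c^2 * g i" using SNrem by (simp add: algebra_simps)
    have f2: "c^2 * g i \<le> c^2 * SN" using SNi by (simp add: mult_left_mono)
    have M0: "0 \<le> M" unfolding M_def using g0 by (simp add: sum_nonneg less_imp_le)
    have f3: "M \<le> (1 + c^2/2) * M" using mult_right_mono[of 1 "1 + c^2/2" M] M0 by simp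
    have f4: "(c^2/2) * SN = c^2 * SN / 2" by simp
    show ?thesis using sumT A1 A2 Ti f0 f1 f2 f3 f4 keyM by linarith
  qed
  have Gf: "Gfun n x w = (SN + M) / real n"
  proof -
    have "(\<Sum>j<n. g j) = SN + M" unfolding SN_def M_def using split fin by (simp add: sum.union_disjoint)
    then show ?thesis unfolding Gfun_def g_def by simp
  qed
  have boundB: "(\<Sum>j<n. T j) \<ge> (c^2/2) * (SN + M)"
    using sumT2 A2 A3 keyM by (simp add: algebra_simps)
  have resA: "eta / real n * (\<Sum>j<n. T j) \<ge> eta * (norm (x i))^2 / (2 * real n * (exp (w \<bullet> x i) + 1))"
  proof -
    have "eta / real n * ((norm (x i))^2 * g i / 2) \<le> eta / real n * (\<Sum>j<n. T j)"
      using boundA eta_pos by (intro mult_left_mono) auto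
    moreover have "eta / real n * ((norm (x i))^2 * g i / 2) = eta * (norm (x i))^2 / (2 * real n * (exp (w \<bullet> x i) + 1))"
      unfolding g_def by (simp add: field_simps)
    ultimately show ?thesis by simp
  qed
  have resB: "eta / real n * (\<Sum>j<n. T j) \<ge> (1/2) * eta * c^2 * Gfun n x w"
  proof -
    have "eta / real n * ((c^2/2) * (SN + M)) \<le> eta / real n * (\<Sum>j<n. T j)"
      using boundB eta_pos by (intro mult_left_mono) auto
    moreover have "eta / real n * ((c^2/2) * (SN + M)) = (1/2) * eta * c^2 * Gfun n x w"
      unfolding Gf by (simp add: field_simps)
    ultimately show ?thesis by linarith
  qed
  show ?thesis using resA resB lhs unfolding c_def w_def by simp
qed

end
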